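(* Let $T\ge1$. For $t=0,1,\dots,T$ let $d_t\ge1$, let $M_t\in\mathbb{R}^{d_t\times d_t}$ be symmetric positive definite, and for $t=1,\dots,T$ let $A_t\in\mathbb{R}^{d_t\times d_{t-1}}$, $G_t\in\mathbb{R}^{K_t\times d_t}$, $R_t\in\mathbb{R}^{K_t\times K_t}$ symmetric positive definite, $r_t\in\mathbb{R}^{K_t}$, and define $\ell_t(u)=\frac12\|r_t-G_tu\|^2_{R_t^{-1}}$. Let $\eta_\delta>0$, $m_0\in\mathbb{R}^{d_0}$, and define recursively for $t=1,\dots,T$ $$m_t=\arg\min_{u\in\mathbb{R}^{d_t}}\Big\{\eta_\delta\,\ell_t(u)+\tfrac12\|u-A_tm_{t-1}\|^2_{M_t}\Big\}.$$ Assume there exists $\gamma\in[0,1)$ such that $A_t^\top M_tA_t\preceq\gamma M_{t-1}$ for all $t=1,\dots,T$. Then for any reference sequence $v_0\in\mathbb{R}^{d_0},\dots,v_T\in\mathbb{R}^{d_T}$, $$\sum_{t=1}^T\{\ell_t(m_t)-\ell_t(v_t)\}\le\frac{1}{2\eta_\delta}\|v_0-m_0\|^2_{M_0}+\frac{1}{2\eta_\delta(1-\gamma)}\sum_{t=1}^T\|v_t-A_tv_{t-1}\|^2_{M_t}.$$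
   Context: For a symmetric positive semidefinite matrix $M$, $\|v\|_M^2=v^\top Mv$; $\preceq$ is the Loewner order. In the application, $m_t$ is the posterior mean of a recursive Gaussian discrepancy update with pre-update covariance $P_t=M_t^{-1}$ and pre-update mean $A_tm_{t-1}$. *)

theory Defs
  imports "Jordan_Normal_Form.Gauss_Jordan_Elimination"
begin

definition wnorm2 :: "real mat \<Rightarrow> real vec \<Rightarrow> real" where
  "wnorm2 M v = v \<bullet> (M *\<^sub>v v)"

definition spd :: "nat \<Rightarrow> real mat \<Rightarrow> bool" where
  "spd n M \<longleftrightarrow> M \<in> carrier_mat n n \<and> transpose_mat M = M \<and>
     (\<forall>x \<in> carrier_vec n. x \<noteq> 0\<^sub>v n \<longrightarrow> x \<bullet> (M *\<^sub>v x) > 0)"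

definition spsd :: "nat \<Rightarrow> real mat \<Rightarrow> bool" where
  "spsd n M \<longleftrightarrow> M \<in> carrier_mat n n \<and> transpose_mat M = M \<and>
     (\<forall>x \<in> carrier_vec n. x \<bullet> (M *\<^sub>v x) \<ge> 0)"

definition loewner_le :: "nat \<Rightarrow> real mat \<Rightarrow> real mat \<Rightarrow> bool" where
  "loewner_le n M N \<longleftrightarrow> spsd n (N - M)"

text \<open>Matrix inverse (R is invertible in the application, being SPD).\<close>
definition minv :: "real mat \<Rightarrow> real mat" where
  "minv R = the (mat_inverse R)"

definition loss :: "real mat \<Rightarrow> real mat \<Rightarrow> real vec \<Rightarrow> real vec \<Rightarrow> real" where
  "loss G R r u = (1/2) * wnorm2 (minv R) (r - G *\<^sub>v u)"

end

theory Submission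
  imports Defs "Jordan_Normal_Form.Determinant"
begin

lemma smult_mat_vec: assumes "A \<in> carrier_mat n n" "x \<in> carrier_vec n"
  shows "(k \<cdot>\<^sub>m A) *\<^sub>v x = k \<cdot>\<^sub>v (A *\<^sub>v (x::real vec))"
  using assms by (intro eq_vecI) auto

lemma wn_expand:
  assumes W: "W \<in> carrier_mat n n" and x: "x \<in> carrier_vec n" and y: "y \<in> carrier_vec n"
  shows "wnorm2 W (x + e \<cdot>\<^sub>v y) = wnorm2 W x + e * (x \<bullet> (W *\<^sub>v y) + y \<bullet> (W *\<^sub>v x)) + e^2 * wnorm2 W (y::real vec)"
proof -
  have "W *\<^sub>v (x + e \<cdot>\<^sub>v y) = W *\<^sub>v x + e \<cdot>\<^sub>v (W *\<^sub>v y)"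
    using W x y by (simp add: mult_add_distrib_mat_vec[OF W] mult_mat_vec[OF W])
  then show ?thesis unfolding wnorm2_def using W x y
    by (simp add: add_scalar_prod_distrib[of _ n] scalar_prod_add_distrib[of _ n] power2_eq_square algebra_simps)
qed

lemma wn_sym:
  assumes W: "W \<in> carrier_mat n n" "transpose_mat W = W" and x: "x \<in> carrier_vec n" and y: "y \<in> carrier_vec n"
  shows "y \<bullet> (W *\<^sub>v x) = x \<bullet> (W *\<^sub>v (y::real vec))"
proof -
  have "(transpose_mat W *\<^sub>v y) \<bullet> x = y \<bullet> (W *\<^sub>v x)" by (rule transpose_vec_mult_scalar[OF W(1) x y])
  then show ?thesis using W x y by (metis comm_scalar_prod mult_mat_vec_carrier)
qed

lemma real_min_lin: fixes a L Q :: real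
  assumes "\<forall>e. a \<le> a + e * L + e^2 * Q" shows "L = 0"
proof (rule ccontr)
  assume L: "L \<noteq> 0"
  define q where "q = \<bar>Q\<bar>"
  have q0: "q \<ge> 0" and Qq: "Q \<le> q" unfolding q_def by auto
  define e where "e = - L / (q + 1)"
  have h: "a \<le> a + e * L + e^2 * Q" using assms by blast
  have "e^2 * Q \<le> e^2 * q" using Qq by (simp add: mult_left_mono)
  hence "0 \<le> e * L + e^2 * q" using h by linarith
  hence "0 \<le> (e * L + e^2 * q) * (q + 1)^2" by simp
  also have "(e * L + e^2 * q) * (q + 1)^2 = (- (L^2)) * (q + 1) + (L^2) * q"
  proof -
    have qp: "q + 1 \<noteq> 0" using q0 by simp
    have 1: "e*L*(q+1)^2 = (- (L^2)) * (q + 1)" unfolding e_def using qp by (simp add: power2_eq_square)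
    have 2: "e^2*q*(q+1)^2 = L^2 * q" unfolding e_def using qp by (simp add: power2_eq_square)
    show ?thesis using 1 2 by (simp add: distrib_right)
  qed
  finally have "0 \<le> - (L^2)" by (simp add: algebra_simps)
  thus False using L by simp
qed

lemma real_cs: fixes qa qb B :: real
  assumes "\<forall>e. 0 \<le> qa + 2 * e * B + e^2 * qb" "qb \<ge> 0" "qa \<ge> 0"
  shows "B^2 \<le> qa * qb"
proof (cases "qb > 0")
  case True
  have "0 \<le> qa + 2 * (-B/qb) * B + (-B/qb)^2 * qb" using assms(1) by blast
  also have "\<dots> = qa - B^2 / qb" using True by (simp add: field_simps power2_eq_square)
  finally have "B^2/qb \<le> qa" by simp
  thus ?thesis using True by (simp add: field_simps)
next
  case False
  hence qb: "qb = 0" using assms by simp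
  have "B = 0"
  proof (rule ccontr)
    assume B: "B \<noteq> 0"
    have "0 \<le> qa + 2 * (-(qa+1)/(2*B)) * B + (-(qa+1)/(2*B))^2 * qb" using assms(1) by blast
    also have "\<dots> = -1" using B qb by (simp add: field_simps)
    finally show False by simp
  qed
  thus ?thesis using assms by simp
qed

lemma real_step2: fixes qa qb B P g :: real
  assumes "0 \<le> g" "g < 1" "qa \<ge> 0" "qb \<ge> 0" "P \<ge> 0" "qb \<le> g * P" "B^2 \<le> qa * qb"
  shows "qa + 2 * B + qb \<le> P + qa / (1 - g)"
proof -
  define S where "S = (1-g)^2 * P + g * qa"
  have S0: "S \<ge> 0" unfolding S_def using assms by simp
  have key: "2 * (1-g) * B \<le> S"
  proof (cases "B \<le> 0")
    case True
    have "(1-g) * B \<le> 0" using True assms by (simp add: mult_nonneg_nonpos)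
    thus ?thesis using S0 by linarith
  next
    case False
    have "(2*(1-g)*B)^2 = 4*(1-g)^2 * B^2" by (simp only: power_mult_distrib) simp
    also have "\<dots> \<le> 4*(1-g)^2 * (qa * (g * P))"
      using assms by (intro mult_left_mono) (auto intro: order.trans mult_left_mono)
    also have "\<dots> \<le> S^2"
    proof -
      have "S^2 - 4*(1-g)^2 * (qa * (g * P)) = ((1-g)^2*P - g*qa)^2"
        unfolding S_def by (simp add: power2_eq_square algebra_simps)
      thus ?thesis by (metis diff_ge_0_iff_ge zero_le_power2)
    qed
    finally show ?thesis using S0 by (rule power2_le_imp_le)
  qed
  have "(qa + 2 * B + qb) * (1 - g) \<le> (P + qa / (1 - g)) * (1-g)"
  proof -
    have "(P + qa / (1 - g)) * (1-g) = (1-g)*P + qa" using assms by (simp add: field_simps)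
    moreover have "qb * (1-g) \<le> g * P * (1-g)" using assms by (simp add: mult_right_mono)
    ultimately show ?thesis using key unfolding S_def by (simp add: algebra_simps power2_eq_square)
  qed
  thus ?thesis using assms by (simp add: mult_le_cancel_right)
qed


lemma minv_psd:
  assumes R: "spd k R"
  shows "minv R \<in> carrier_mat k k \<and> (\<forall>x \<in> carrier_vec k. 0 \<le> x \<bullet> (minv R *\<^sub>v x))"
proof -
  have Rc: "R \<in> carrier_mat k k" and Rt: "transpose_mat R = R"
    and Rp: "\<forall>x \<in> carrier_vec k. x \<noteq> 0\<^sub>v k \<longrightarrow> x \<bullet> (R *\<^sub>v x) > 0"
    using R unfolding spd_def by auto
  have "det R \<noteq> 0"
  proof
    assume "det R = 0"
    then obtain w where w: "w \<in> carrier_vec k" "w \<noteq> 0\<^sub>v k" "R *\<^sub>v w = 0\<^sub>v k"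
      using det_0_iff_vec_prod_zero_field[OF Rc] by blast
    have "w \<bullet> (R *\<^sub>v w) > 0" using Rp w by blast
    thus False using w by simp
  qed
  hence "R \<in> Units (ring_mat TYPE(real) k ())" by (rule det_non_zero_imp_unit[OF Rc])
  hence "mat_inverse R \<noteq> None" using mat_inverse(1)[OF Rc, of "()"] by blast
  then obtain B where B: "mat_inverse R = Some B" by blast
  from mat_inverse(2)[OF Rc B] have RB: "R * B = 1\<^sub>m k" and Bc: "B \<in> carrier_mat k k" by auto
  have mB: "minv R = B" unfolding minv_def B by simp
  have "\<forall>x \<in> carrier_vec k. 0 \<le> x \<bullet> (B *\<^sub>v x)"
  proof
    fix x :: "real vec" assume x: "x \<in> carrier_vec k"
    define y where "y = B *\<^sub>v x"
    have y: "y \<in> carrier_vec k" unfolding y_def using Bc x by simp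
    have "R *\<^sub>v y = (R * B) *\<^sub>v x" unfolding y_def using Rc Bc x by simp
    hence Ry: "R *\<^sub>v y = x" using RB x by simp
    have "x \<bullet> (B *\<^sub>v x) = (transpose_mat R *\<^sub>v y) \<bullet> y" unfolding y_def[symmetric] Rt Ry ..
    also have "\<dots> = y \<bullet> (R *\<^sub>v y)" by (rule transpose_vec_mult_scalar[OF Rc y y])
    also have "\<dots> \<ge> 0" using Rp y Rc by (cases "y = 0\<^sub>v k") (auto intro: less_imp_le)
    finally show "0 \<le> x \<bullet> (B *\<^sub>v x)" .
  qed
  thus ?thesis using mB Bc by simp
qed

lemma vec_cs:
  assumes W: "W \<in> carrier_mat n n" "transpose_mat W = W" and psd: "\<forall>x \<in> carrier_vec n. 0 \<le> wnorm2 W x"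
    and a: "a \<in> carrier_vec n" and b: "b \<in> carrier_vec n"
  shows "(a \<bullet> (W *\<^sub>v (b::real vec)))^2 \<le> wnorm2 W a * wnorm2 W b"
proof (rule real_cs)
  show "\<forall>e. 0 \<le> wnorm2 W a + 2 * e * (a \<bullet> (W *\<^sub>v b)) + e^2 * wnorm2 W b"
  proof
    fix e :: real
    have "0 \<le> wnorm2 W (a + e \<cdot>\<^sub>v b)" using psd a b by simp
    also have "\<dots> = wnorm2 W a + 2 * e * (a \<bullet> (W *\<^sub>v b)) + e^2 * wnorm2 W b"
      unfolding wn_expand[OF W(1) a b] wn_sym[OF W a b] by simp
    finally show "0 \<le> wnorm2 W a + 2 * e * (a \<bullet> (W *\<^sub>v b)) + e^2 * wnorm2 W b" .
  qed
qed (use psd a b in auto)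

lemma step1:
  fixes \<eta> :: real
  assumes G: "G \<in> carrier_mat k n" and W: "W \<in> carrier_mat k k"
    and Wpsd: "\<forall>x \<in> carrier_vec k. 0 \<le> x \<bullet> (W *\<^sub>v x)"
    and M: "M \<in> carrier_mat n n" and r: "r \<in> carrier_vec k"
    and c: "c \<in> carrier_vec n" and m: "m \<in> carrier_vec n" and v: "v \<in> carrier_vec n"
    and eta: "\<eta> > 0"
    and min: "\<forall>u \<in> carrier_vec n. \<eta> * (1/2 * wnorm2 W (r - G *\<^sub>v m)) + 1/2 * wnorm2 M (m - c)
                 \<le> \<eta> * (1/2 * wnorm2 W (r - G *\<^sub>v u)) + 1/2 * wnorm2 M (u - c)"
  shows "\<eta> * (1/2 * wnorm2 W (r - G *\<^sub>v m)) + 1/2 * wnorm2 M (m - c) + 1/2 * wnorm2 M (v - m)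
         \<le> \<eta> * (1/2 * wnorm2 W (r - G *\<^sub>v v)) + 1/2 * wnorm2 M (v - c)"
proof -
  define f where "f u = \<eta> * (1/2 * wnorm2 W (r - G *\<^sub>v u)) + 1/2 * wnorm2 M (u - c)" for u
  define s where "s = v - m"
  have s: "s \<in> carrier_vec n" unfolding s_def using v m by simp
  define x where "x = r - G *\<^sub>v m"
  define y where "y = - (G *\<^sub>v s)"
  have x: "x \<in> carrier_vec k" unfolding x_def using r G m by simp
  have y: "y \<in> carrier_vec k" unfolding y_def using G s by simp
  define L where "L = \<eta> * (1/2 * (x \<bullet> (W *\<^sub>v y) + y \<bullet> (W *\<^sub>v x))) + 1/2 * ((m - c) \<bullet> (M *\<^sub>v s) + s \<bullet> (M *\<^sub>v (m - c)))"
  define Q where "Q = \<eta> * (1/2 * wnorm2 W y) + 1/2 * wnorm2 M s"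
  have exp: "f (m + e \<cdot>\<^sub>v s) = f m + e * L + e^2 * Q" for e
  proof -
    have "G *\<^sub>v (m + e \<cdot>\<^sub>v s) = G *\<^sub>v m + e \<cdot>\<^sub>v (G *\<^sub>v s)"
      using G m s by (simp add: mult_add_distrib_mat_vec[OF G] mult_mat_vec[OF G])
    hence 1: "r - G *\<^sub>v (m + e \<cdot>\<^sub>v s) = x + e \<cdot>\<^sub>v y"
      unfolding x_def y_def using r G m s by (intro eq_vecI) auto
    have 2: "m + e \<cdot>\<^sub>v s - c = (m - c) + e \<cdot>\<^sub>v s"
      using c m s by (intro eq_vecI) auto
    have mc: "m - c \<in> carrier_vec n" using m c by simp
    show ?thesis unfolding f_def 1 2 wn_expand[OF W x y] wn_expand[OF M mc s] L_def Q_def x_def[symmetric]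
      by (simp add: algebra_simps)
  qed
  have "\<forall>e. f m \<le> f m + e * L + e^2 * Q"
  proof
    fix e
    have "m + e \<cdot>\<^sub>v s \<in> carrier_vec n" using m s by simp
    hence "f m \<le> f (m + e \<cdot>\<^sub>v s)" using min unfolding f_def by blast
    thus "f m \<le> f m + e * L + e^2 * Q" using exp by simp
  qed
  hence L0: "L = 0" by (rule real_min_lin)
  have vv: "m + 1 \<cdot>\<^sub>v s = v" unfolding s_def using m v by (intro eq_vecI) auto
  have "f v = f m + Q" using exp[of 1] L0 unfolding vv by simp
  moreover have "0 \<le> wnorm2 W y" using Wpsd y unfolding wnorm2_def by blast
  ultimately have "f m + 1/2 * wnorm2 M s \<le> f v" unfolding Q_def using eta by simp
  thus ?thesis unfolding f_def s_def .
qed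

lemma loewner_step:
  fixes \<gamma> :: real
  assumes A: "A \<in> carrier_mat n p" and M: "M \<in> carrier_mat n n" and M': "M' \<in> carrier_mat p p"
    and le: "loewner_le p (transpose_mat A * M * A) (\<gamma> \<cdot>\<^sub>m M')"
    and e: "e \<in> carrier_vec p"
  shows "wnorm2 M (A *\<^sub>v e) \<le> \<gamma> * wnorm2 M' e"
proof -
  have "0 \<le> e \<bullet> ((\<gamma> \<cdot>\<^sub>m M' - transpose_mat A * M * A) *\<^sub>v e)"
    using le e unfolding loewner_le_def spsd_def by blast
  also have "(\<gamma> \<cdot>\<^sub>m M' - transpose_mat A * M * A) *\<^sub>v e = \<gamma> \<cdot>\<^sub>v (M' *\<^sub>v e) - transpose_mat A *\<^sub>v (M *\<^sub>v (A *\<^sub>v e))"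
  proof -
    have c1: "\<gamma> \<cdot>\<^sub>m M' \<in> carrier_mat p p" using M' by simp
    have c2: "transpose_mat A * M * A \<in> carrier_mat p p" using A M by simp
    have "(transpose_mat A * M * A) *\<^sub>v e = (transpose_mat A * M) *\<^sub>v (A *\<^sub>v e)"
      by (rule assoc_mult_mat_vec) (use A M e in auto)
    also have "\<dots> = transpose_mat A *\<^sub>v (M *\<^sub>v (A *\<^sub>v e))"
      by (rule assoc_mult_mat_vec) (use A M e in auto)
    finally show ?thesis
      unfolding minus_mult_distrib_mat_vec[OF c1 c2 e] smult_mat_vec[OF M' e] by simp
  qed
  also have "e \<bullet> (\<gamma> \<cdot>\<^sub>v (M' *\<^sub>v e) - transpose_mat A *\<^sub>v (M *\<^sub>v (A *\<^sub>v e)))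
      = \<gamma> * wnorm2 M' e - (transpose_mat A *\<^sub>v (M *\<^sub>v (A *\<^sub>v e))) \<bullet> e"
  proof -
    have "e \<bullet> (\<gamma> \<cdot>\<^sub>v (M' *\<^sub>v e) - transpose_mat A *\<^sub>v (M *\<^sub>v (A *\<^sub>v e)))
       = e \<bullet> (\<gamma> \<cdot>\<^sub>v (M' *\<^sub>v e)) - e \<bullet> (transpose_mat A *\<^sub>v (M *\<^sub>v (A *\<^sub>v e)))"
      by (rule scalar_prod_minus_distrib[of _ p]) (use A M M' e in auto)
    also have "e \<bullet> (transpose_mat A *\<^sub>v (M *\<^sub>v (A *\<^sub>v e))) = (transpose_mat A *\<^sub>v (M *\<^sub>v (A *\<^sub>v e))) \<bullet> e"
      by (rule comm_scalar_prod[of _ p]) (use A M e in auto)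
    finally show ?thesis unfolding wnorm2_def using M' e by simp
  qed
  also have "(transpose_mat A *\<^sub>v (M *\<^sub>v (A *\<^sub>v e))) \<bullet> e = (M *\<^sub>v (A *\<^sub>v e)) \<bullet> (A *\<^sub>v e)"
    by (rule transpose_vec_mult_scalar[OF A e]) (use A M e in simp)
  also have "\<dots> = wnorm2 M (A *\<^sub>v e)"
    unfolding wnorm2_def by (rule comm_scalar_prod[of _ n]) (use A M e in auto)
  finally show ?thesis by simp
qed


lemma spd_psd: assumes "spd n M" shows "M \<in> carrier_mat n n" "transpose_mat M = M" "\<forall>x \<in> carrier_vec n. 0 \<le> wnorm2 M x"
proof -
  show "M \<in> carrier_mat n n" "transpose_mat M = M" using assms unfolding spd_def by auto
  show "\<forall>x \<in> carrier_vec n. 0 \<le> wnorm2 M x"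
  proof
    fix x :: "real vec" assume x: "x \<in> carrier_vec n"
    show "0 \<le> wnorm2 M x"
    proof (cases "x = 0\<^sub>v n")
      case True thus ?thesis using \<open>M \<in> carrier_mat n n\<close> unfolding wnorm2_def by simp
    next
      case False thus ?thesis using assms x unfolding spd_def wnorm2_def by (auto intro: less_imp_le)
    qed
  qed
qed

lemma step2:
  fixes \<gamma> P :: real
  assumes M: "spd n M" and a: "a \<in> carrier_vec n" and b: "b \<in> carrier_vec n"
    and g: "0 \<le> \<gamma>" "\<gamma> < 1" and P: "0 \<le> P" and qb: "wnorm2 M b \<le> \<gamma> * P"
  shows "wnorm2 M (a + b) \<le> P + wnorm2 M a / (1 - \<gamma>)"
proof -
  note Mp = spd_psd[OF M]
  have "wnorm2 M (a + b) = wnorm2 M (a + 1 \<cdot>\<^sub>v b)" by simp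
  also have "\<dots> = wnorm2 M a + 2 * (a \<bullet> (M *\<^sub>v b)) + wnorm2 M b"
    unfolding wn_expand[OF Mp(1) a b] wn_sym[OF Mp(1,2) a b] by simp
  also have "\<dots> \<le> P + wnorm2 M a / (1 - \<gamma>)"
    by (rule real_step2[OF g _ _ P qb vec_cs[OF Mp a b]]) (use Mp a b in auto)
  finally show ?thesis .
qed

lemma telescope: "(\<Sum>t = 1..(T::nat). f (t - 1) - f t) = f 0 - (f T :: real)"
  by (induction T) (auto simp: sum.cl_ivl_Suc)

theorem theorem1:
  fixes T :: nat and d K :: "nat \<Rightarrow> nat"
    and M A G R :: "nat \<Rightarrow> real mat" and r m v :: "nat \<Rightarrow> real vec"
    and \<eta> \<gamma> :: real
  assumes T1: "T \<ge> 1"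
    and d_pos: "\<forall>t \<le> T. d t \<ge> 1"
    and M_spd: "\<forall>t \<le> T. spd (d t) (M t)"
    and A_dim: "\<forall>t \<in> {1..T}. A t \<in> carrier_mat (d t) (d (t - 1))"
    and G_dim: "\<forall>t \<in> {1..T}. G t \<in> carrier_mat (K t) (d t)"
    and R_spd: "\<forall>t \<in> {1..T}. spd (K t) (R t)"
    and r_dim: "\<forall>t \<in> {1..T}. r t \<in> carrier_vec (K t)"
    and eta_pos: "\<eta> > 0"
    and m0: "m 0 \<in> carrier_vec (d 0)"
    and m_argmin: "\<forall>t \<in> {1..T}. m t \<in> carrier_vec (d t) \<and>
        (\<forall>u \<in> carrier_vec (d t).
           \<eta> * loss (G t) (R t) (r t) (m t) + (1/2) * wnorm2 (M t) (m t - A t *\<^sub>v m (t - 1))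
         \<le> \<eta> * loss (G t) (R t) (r t) u + (1/2) * wnorm2 (M t) (u - A t *\<^sub>v m (t - 1)))"
    and gamma: "0 \<le> \<gamma>" "\<gamma> < 1"
    and contr: "\<forall>t \<in> {1..T}. loewner_le (d (t - 1))
                  (transpose_mat (A t) * M t * A t) (\<gamma> \<cdot>\<^sub>m M (t - 1))"
    and v_dim: "\<forall>t \<le> T. v t \<in> carrier_vec (d t)"
  shows "(\<Sum>t = 1..T. loss (G t) (R t) (r t) (m t) - loss (G t) (R t) (r t) (v t))
         \<le> 1 / (2 * \<eta>) * wnorm2 (M 0) (v 0 - m 0)
           + 1 / (2 * \<eta> * (1 - \<gamma>)) * (\<Sum>t = 1..T. wnorm2 (M t) (v t - A t *\<^sub>v v (t - 1)))"
  proof -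
  define P where "P t = wnorm2 (M t) (v t - m t)" for t
  define D where "D t = wnorm2 (M t) (v t - A t *\<^sub>v v (t - 1))" for t
  define lm where "lm t = loss (G t) (R t) (r t) (m t)" for t
  define lv where "lv t = loss (G t) (R t) (r t) (v t)" for t
  have mdim: "m t \<in> carrier_vec (d t)" if "t \<le> T" for t
    using m0 m_argmin that by (cases "t = 0") auto
  have P0: "0 \<le> P t" if "t \<le> T" for t
    unfolding P_def using spd_psd(3)[OF M_spd[rule_format, OF that]] v_dim mdim that by simp
  have per: "\<eta> * (lm t - lv t) \<le> 1/2 * P (t - 1) - 1/2 * P t + 1/2 * (D t / (1 - \<gamma>))"
    if t: "t \<in> {1..T}" for t
  proof -
    have tT: "t \<le> T" "t - 1 \<le> T" using t by auto
    note Mt = spd_psd[OF M_spd[rule_format, OF tT(1)]]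
    note Mt1 = spd_psd[OF M_spd[rule_format, OF tT(2)]]
    have A: "A t \<in> carrier_mat (d t) (d (t - 1))" using A_dim t by blast
    have G: "G t \<in> carrier_mat (K t) (d t)" using G_dim t by blast
    have rr: "r t \<in> carrier_vec (K t)" using r_dim t by blast
    have W: "minv (R t) \<in> carrier_mat (K t) (K t)" "\<forall>x \<in> carrier_vec (K t). 0 \<le> x \<bullet> (minv (R t) *\<^sub>v x)"
      using minv_psd[of "K t" "R t"] R_spd t by auto
    have vt: "v t \<in> carrier_vec (d t)" and vt1: "v (t - 1) \<in> carrier_vec (d (t - 1))" using v_dim tT by auto
    have mt: "m t \<in> carrier_vec (d t)" and mt1: "m (t - 1) \<in> carrier_vec (d (t - 1))" using mdim tT by auto
    define c where "c = A t *\<^sub>v m (t - 1)"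
    have c: "c \<in> carrier_vec (d t)" unfolding c_def using A mt1 by simp
    have min: "\<forall>u \<in> carrier_vec (d t). \<eta> * (1/2 * wnorm2 (minv (R t)) (r t - G t *\<^sub>v m t)) + 1/2 * wnorm2 (M t) (m t - c)
                 \<le> \<eta> * (1/2 * wnorm2 (minv (R t)) (r t - G t *\<^sub>v u)) + 1/2 * wnorm2 (M t) (u - c)"
      using m_argmin t unfolding c_def loss_def by blast
    have s1: "\<eta> * lm t + 1/2 * wnorm2 (M t) (m t - c) + 1/2 * P t \<le> \<eta> * lv t + 1/2 * wnorm2 (M t) (v t - c)"
      using step1[OF G W(1) W(2) Mt(1) rr c mt vt eta_pos min] unfolding lm_def lv_def loss_def P_def .
    define a where "a = v t - A t *\<^sub>v v (t - 1)"
    define e where "e = v (t - 1) - m (t - 1)"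
    have a: "a \<in> carrier_vec (d t)" unfolding a_def using vt A vt1 by simp
    have e: "e \<in> carrier_vec (d (t - 1))" unfolding e_def using vt1 mt1 by simp
    have b: "A t *\<^sub>v e \<in> carrier_vec (d t)" using A e by simp
    have ab: "a + A t *\<^sub>v e = v t - c"
    proof -
      have "A t *\<^sub>v e = A t *\<^sub>v v (t - 1) - A t *\<^sub>v m (t - 1)"
        unfolding e_def by (rule mult_minus_distrib_mat_vec[OF A vt1 mt1])
      thus ?thesis unfolding a_def c_def using A vt vt1 mt1 by (intro eq_vecI) auto
    qed
    have qb: "wnorm2 (M t) (A t *\<^sub>v e) \<le> \<gamma> * P (t - 1)"
      unfolding P_def e_def[symmetric]
      by (rule loewner_step[OF A Mt(1) Mt1(1) _ e]) (use contr t in blast)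
    have s2: "wnorm2 (M t) (v t - c) \<le> P (t - 1) + D t / (1 - \<gamma>)"
      using step2[OF M_spd[rule_format, OF tT(1)] a b gamma P0[OF tT(2)] qb]
      unfolding ab by (simp add: D_def a_def)
    have "0 \<le> wnorm2 (M t) (m t - c)" using Mt(3) mt c by simp
    moreover have "\<eta> * (lm t - lv t) = \<eta> * lm t - \<eta> * lv t" by (simp add: algebra_simps)
    ultimately show ?thesis using s1 s2 by linarith
  qed
  have "\<eta> * (\<Sum>t = 1..T. lm t - lv t) = (\<Sum>t = 1..T. \<eta> * (lm t - lv t))"
    by (simp add: sum_distrib_left)
  also have "\<dots> \<le> (\<Sum>t = 1..T. 1/2 * (P (t - 1) - P t) + 1/2 / (1 - \<gamma>) * D t)"
    by (rule sum_mono) (use per in \<open>simp add: algebra_simps\<close>)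
  also have "\<dots> = 1/2 * (P 0 - P T) + 1/2 / (1 - \<gamma>) * (\<Sum>t = 1..T. D t)"
    unfolding sum.distrib sum_distrib_left[symmetric] telescope[of P T] ..
  also have "\<dots> \<le> 1/2 * P 0 + 1/2 / (1 - \<gamma>) * (\<Sum>t = 1..T. D t)"
    using P0[of T] by simp
  finally have fin: "\<eta> * (\<Sum>t = 1..T. lm t - lv t) \<le> 1/2 * P 0 + 1/2 / (1 - \<gamma>) * (\<Sum>t = 1..T. D t)" .
  have "(\<Sum>t = 1..T. lm t - lv t) \<le> (1/2 * P 0 + 1/2 / (1 - \<gamma>) * (\<Sum>t = 1..T. D t)) / \<eta>"
    using fin eta_pos by (simp add: field_simps)
  also have "\<dots> = 1 / (2 * \<eta>) * P 0 + 1 / (2 * \<eta> * (1 - \<gamma>)) * (\<Sum>t = 1..T. D t)"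
    using eta_pos gamma by (simp add: field_simps)
  finally show ?thesis unfolding lm_def lv_def P_def D_def by simp
qed

end
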